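(* Let $\Gamma>0$. For $M\ge1$ and $s>\sqrt M$ define $$\tilde\rho^{M,{\rm d}}(s)=\frac{e^{\beta f(\Gamma,1/\pi)}}{M^{\Gamma/4}}\exp\Big(-\frac{M\Gamma}{2}\Big(\frac{s^2}{M}-1\Big)+M\Gamma\log\frac{s}{\sqrt M}-\frac\Gamma2\log\Big(\frac{s^2}{M}-1\Big)\Big),$$ and for $s<0$ define $$\tilde\rho^{M,{\rm c}}(s)=\Big(\frac{2\pi}{\sqrt M}\Big)^{\Gamma/2}e^{\beta f(\Gamma,1)}\frac{e^{-\Gamma\pi s^2+\Gamma\pi s/\sqrt M}}{(1-e^{4\pi s/\sqrt M})^{\Gamma/2}}.$$ Then for every fixed $y<0$, $$\lim_{N\to\infty}\tilde\rho^{N+1,{\rm d}}\big(\sqrt N-y\big)=\lim_{N\to\infty}\frac1\pi\,\tilde\rho^{N,{\rm c}}\big(y/\sqrt\pi\big)=e^{\beta f(\Gamma,1/\pi)}\frac{e^{-\Gamma y^2}}{(2|y|)^{\Gamma/2}}.$$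
   Context: $\beta f(\Gamma,\rho_b)$ is the dimensionless free energy per particle of the two-dimensional one-component plasma at coupling $\Gamma$ and background density $\rho_b$: $\beta f(\Gamma,\rho_b)=\lim_{N\to\infty}-\frac1N\log Z^{\rm d}_{N,\Gamma}(\rho_b)$ with $Z^{\rm d}_{N,\Gamma}(\rho_b)=\frac1{N!}\int_{(\mathbb R^2)^N}e^{-\Gamma N^2(\frac12\log R-\frac38)}e^{-\pi\Gamma\rho_b\sum_j|\vec r_j|^2/2}\prod_{j<k}|\vec r_k-\vec r_j|^\Gamma\,d\vec r_1\cdots d\vec r_N$, $R=\sqrt{N/(\pi\rho_b)}$. It is known that $\beta f(\Gamma,\rho_b)=(1-\frac\Gamma4)\log\rho_b+g(\Gamma)$ for a function $g$ independent of $\rho_b$. The functions $\tilde\rho^{M,{\rm d}}$ and $\tilde\rho^{M,{\rm c}}$ are the large-deviation forms (without the $o(1)$ terms) of the one-body density outside the plasma in the soft disk ($\rho_b=1/\pi$, unscaled radial coordinate $s$) and soft cylinder ($\rho_b=1$, $L=W=\sqrt M$, unscaled axial coordinate $s$) respectively. *)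

theory Defs
  imports "HOL-Analysis.Analysis"
begin

text \<open>Points of the plane are represented as complex numbers. Configurations of N
particles are functions nat \<Rightarrow> complex restricted to {..<N}, with the product
Lebesgue measure.\<close>

definition ocp_integrand :: "nat \<Rightarrow> real \<Rightarrow> real \<Rightarrow> (nat \<Rightarrow> complex) \<Rightarrow> real" where
  "ocp_integrand N \<Gamma> \<rho>b r =
     exp (- \<Gamma> * (real N)^2 * (ln (sqrt (real N / (pi * \<rho>b))) / 2 - 3/8))
   * exp (- pi * \<Gamma> * \<rho>b * (\<Sum>j<N. (cmod (r j))^2) / 2)
   * (\<Prod>(j,k)\<in>{(j,k). j < k \<and> k < N}. cmod (r k - r j) powr \<Gamma>)"

definition ocp_Z :: "nat \<Rightarrow> real \<Rightarrow> real \<Rightarrow> real" where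
  "ocp_Z N \<Gamma> \<rho>b = (1 / fact N) *
     enn2real (\<integral>\<^sup>+ r. ennreal (ocp_integrand N \<Gamma> \<rho>b r)
                 \<partial>(PiM {..<N} (\<lambda>_. (lborel :: complex measure))))"

definition ocp_fN :: "real \<Rightarrow> real \<Rightarrow> nat \<Rightarrow> real" where
  "ocp_fN \<Gamma> \<rho>b N = - ln (ocp_Z N \<Gamma> \<rho>b) / real N"

definition beta_f :: "real \<Rightarrow> real \<Rightarrow> real" where
  "beta_f \<Gamma> \<rho>b = lim (ocp_fN \<Gamma> \<rho>b)"

definition rho_disk :: "real \<Rightarrow> real \<Rightarrow> real \<Rightarrow> real" where
  "rho_disk \<Gamma> M s = exp (beta_f \<Gamma> (1/pi)) / M powr (\<Gamma>/4) *
     exp (- M * \<Gamma> / 2 * (s^2 / M - 1) + M * \<Gamma> * ln (s / sqrt M)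
          - \<Gamma> / 2 * ln (s^2 / M - 1))"

definition rho_cyl :: "real \<Rightarrow> real \<Rightarrow> real \<Rightarrow> real" where
  "rho_cyl \<Gamma> M s = (2 * pi / sqrt M) powr (\<Gamma>/2) * exp (beta_f \<Gamma> 1) *
     exp (- \<Gamma> * pi * s^2 + \<Gamma> * pi * s / sqrt M)
     / (1 - exp (4 * pi * s / sqrt M)) powr (\<Gamma>/2)"

end

theory Submission
  imports Defs "HOL-Real_Asymp.Real_Asymp" "HOL-Probability.Probability"
begin


abbreviation PC :: "nat set \<Rightarrow> (nat \<Rightarrow> complex) measure" where
  "PC I \<equiv> PiM I (\<lambda>_. (lborel :: complex measure))"

lemma psf: "product_sigma_finite (\<lambda>_::nat. lborel :: complex measure)"
  by (simp add: product_sigma_finite_def sigma_finite_lborel)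

lemma scale1:
  fixes g :: "complex \<Rightarrow> ennreal" and c :: real
  assumes c: "c \<noteq> 0" and g[measurable]: "g \<in> borel_measurable borel"
  shows "(\<integral>\<^sup>+y. g y \<partial>lborel) = (\<integral>\<^sup>+y. ennreal (\<bar>c\<bar>^2) * g (c *\<^sub>R y) \<partial>lborel)"
proof -
  have eq: "(lborel::complex measure) = density (distr lborel borel (\<lambda>x. 0 + c *\<^sub>R x)) (\<lambda>_. \<bar>c\<bar>^DIM(complex))"
    using lborel_affine[OF c] .
  have "(\<integral>\<^sup>+y. g y \<partial>lborel) = integral\<^sup>N (density (distr lborel borel (\<lambda>x. 0 + c *\<^sub>R x)) (\<lambda>_. \<bar>c\<bar>^DIM(complex))) g"
    by (rule arg_cong[where f="\<lambda>M. integral\<^sup>N M g"]) (rule eq)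
  also have "\<dots> = (\<integral>\<^sup>+y. ennreal (\<bar>c\<bar>^2) * g (c *\<^sub>R y) \<partial>lborel)"
    by (simp add: nn_integral_density nn_integral_distr)
  finally show ?thesis .
qed

lemma scale:
  fixes c :: real
  assumes c: "c \<noteq> 0" and I: "finite I"
  shows "f \<in> borel_measurable (PC I) \<Longrightarrow>
    (\<integral>\<^sup>+x. f x \<partial>PC I) = (\<integral>\<^sup>+x. ennreal (\<bar>c\<bar>^(2*card I)) * f (\<lambda>j\<in>I. c *\<^sub>R x j) \<partial>PC I)"
  using I
proof (induction I arbitrary: f rule: finite_induct)
  case empty
  then show ?case by (simp add: PiM_empty restrict_def nn_integral_count_space_finite)
next
  case (insert i I)
  interpret product_sigma_finite "\<lambda>_::nat. lborel :: complex measure" by (rule psf)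
  note f[measurable] = insert.prems
  define K where "K = ennreal (\<bar>c\<bar>^(2*card I))"
  define F where "F = (\<lambda>z. f (\<lambda>j\<in>insert i I. if j = i then z j else c *\<^sub>R z j))"
  define G where "G = (\<lambda>z. f (\<lambda>j\<in>insert i I. c *\<^sub>R z j))"
  have Fm[measurable]: "F \<in> borel_measurable (PC (insert i I))"
    unfolding F_def by measurable
  have Gm[measurable]: "G \<in> borel_measurable (PC (insert i I))"
    unfolding G_def by measurable
  have "(\<integral>\<^sup>+x. f x \<partial>PC (insert i I)) = (\<integral>\<^sup>+ y. (\<integral>\<^sup>+ x. f (x(i := y)) \<partial>(PC I)) \<partial>lborel)"
    using insert by (subst product_nn_integral_insert_rev) auto
  also have "\<dots> = (\<integral>\<^sup>+ y. (\<integral>\<^sup>+ x. K * F (x(i := y)) \<partial>(PC I)) \<partial>lborel)"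
  proof (rule nn_integral_cong)
    fix y :: complex
    have "(\<integral>\<^sup>+ x. f (x(i := y)) \<partial>(PC I)) = (\<integral>\<^sup>+ x. K * f ((\<lambda>x. x(i := y)) (\<lambda>j\<in>I. c *\<^sub>R x j)) \<partial>(PC I))"
      unfolding K_def
      by (rule insert.IH) (use insert in measurable)
    also have "\<dots> = (\<integral>\<^sup>+ x. K * F (x(i := y)) \<partial>(PC I))"
    proof (rule nn_integral_cong)
      fix x assume "x \<in> space (PC I)"
      have "(\<lambda>j\<in>I. c *\<^sub>R x j)(i := y) = (\<lambda>j\<in>insert i I. if j = i then (x(i:=y)) j else c *\<^sub>R (x(i:=y)) j)"
        using insert by (auto simp: restrict_def fun_eq_iff)
      then show "K * f ((\<lambda>x. x(i := y)) (\<lambda>j\<in>I. c *\<^sub>R x j)) = K * F (x(i := y))"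
        by (simp add: F_def)
    qed
    finally show "(\<integral>\<^sup>+ x. f (x(i := y)) \<partial>(PC I)) = (\<integral>\<^sup>+ x. K * F (x(i := y)) \<partial>(PC I))" .
  qed
  also have "\<dots> = (\<integral>\<^sup>+z. K * F z \<partial>PC (insert i I))"
    using insert by (subst product_nn_integral_insert_rev) auto
  also have "\<dots> = (\<integral>\<^sup>+ x. (\<integral>\<^sup>+ y. K * F (x(i := y)) \<partial>lborel) \<partial>(PC I))"
    using insert by (subst product_nn_integral_insert) auto
  also have "\<dots> = (\<integral>\<^sup>+ x. (\<integral>\<^sup>+ y. K * ennreal (\<bar>c\<bar>^2) * G (x(i := y)) \<partial>lborel) \<partial>(PC I))"
  proof (rule nn_integral_cong)
    fix x assume x: "x \<in> space (PC I)"
    have m: "(\<lambda>y. K * F (x(i := y))) \<in> borel_measurable borel"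
      using x insert by measurable
    have "(\<integral>\<^sup>+ y. K * F (x(i := y)) \<partial>lborel) = (\<integral>\<^sup>+ y. ennreal (\<bar>c\<bar>^2) * (K * F (x(i := c *\<^sub>R y))) \<partial>lborel)"
      by (rule scale1[OF c m])
    also have "\<dots> = (\<integral>\<^sup>+ y. K * ennreal (\<bar>c\<bar>^2) * G (x(i := y)) \<partial>lborel)"
    proof (rule nn_integral_cong)
      fix y :: complex
      have "(\<lambda>j\<in>insert i I. if j = i then (x(i := c *\<^sub>R y)) j else c *\<^sub>R (x(i := c *\<^sub>R y)) j)
          = (\<lambda>j\<in>insert i I. c *\<^sub>R (x(i := y)) j)"
        using insert by (auto simp: restrict_def fun_eq_iff)
      then show "ennreal (\<bar>c\<bar>^2) * (K * F (x(i := c *\<^sub>R y))) = K * ennreal (\<bar>c\<bar>^2) * G (x(i := y))"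
        by (simp add: F_def G_def mult_ac)
    qed
    finally show "(\<integral>\<^sup>+ y. K * F (x(i := y)) \<partial>lborel) = (\<integral>\<^sup>+ y. K * ennreal (\<bar>c\<bar>^2) * G (x(i := y)) \<partial>lborel)" .
  qed
  also have "\<dots> = (\<integral>\<^sup>+z. K * ennreal (\<bar>c\<bar>^2) * G z \<partial>PC (insert i I))"
    using insert by (subst product_nn_integral_insert) auto
  also have "K * ennreal (\<bar>c\<bar>^2) = ennreal (\<bar>c\<bar>^(2*card (insert i I)))"
    using insert by (simp add: K_def ennreal_mult'[symmetric] power_add[symmetric] power2_eq_square)
  finally show ?case unfolding G_def .
qed



definition PS :: "nat \<Rightarrow> (nat \<times> nat) set" where "PS N = {(j,k). j < k \<and> k < N}"

lemma PS_Suc: "PS (Suc N) = PS N \<union> (\<lambda>j. (j, N)) ` {..<N}"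
  by (auto simp: PS_def)

lemma PS_finite: "finite (PS N)"
proof -
  have "PS N \<subseteq> {..<N} \<times> {..<N}" by (auto simp: PS_def)
  then show ?thesis by (rule finite_subset) auto
qed

lemma card_PS: "2 * card (PS N) = N * (N - 1)"
proof (induction N)
  case 0 then show ?case by (simp add: PS_def)
next
  case (Suc N)
  have "card (PS (Suc N)) = card (PS N) + card ((\<lambda>j. (j, N)) ` {..<N})"
    unfolding PS_Suc by (rule card_Un_disjoint) (use PS_finite in \<open>auto simp: PS_def\<close>)
  also have "card ((\<lambda>j. (j, N)) ` {..<N}) = N"
    by (subst card_image) (auto simp: inj_on_def)
  finally show ?case using Suc by (cases N) (auto simp: algebra_simps)
qed

lemma integrand_alt: "ocp_integrand N \<Gamma> \<rho> r =
     exp (- \<Gamma> * (real N)^2 * (ln (sqrt (real N / (pi * \<rho>))) / 2 - 3/8))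
   * exp (- pi * \<Gamma> * \<rho> * (\<Sum>j<N. (cmod (r j))^2) / 2)
   * (\<Prod>p\<in>PS N. cmod (r (snd p) - r (fst p)) powr \<Gamma>)"
  unfolding ocp_integrand_def PS_def by (simp add: case_prod_beta')

lemma integrand_meas[measurable]: "(\<lambda>r. ocp_integrand N \<Gamma> \<rho> r) \<in> borel_measurable (PC {..<N})"
proof -
  have [measurable]: "(\<lambda>r. cmod (r (snd p) - r (fst p)) powr \<Gamma>) \<in> borel_measurable (PC {..<N})" if "p \<in> PS N" for p
  proof -
    have "snd p \<in> {..<N}" "fst p \<in> {..<N}" using that by (auto simp: PS_def)
    then show ?thesis by measurable
  qed
  have [measurable]: "(\<lambda>r. cmod (r j)) \<in> borel_measurable (PC {..<N})" if "j \<in> {..<N}" for j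
    using that by measurable
  show ?thesis unfolding integrand_alt by measurable
qed

lemma integrand_nonneg: "ocp_integrand N \<Gamma> \<rho> r \<ge> 0"
  unfolding integrand_alt by (intro mult_nonneg_nonneg prod_nonneg) auto

lemma integrand_scale:
  assumes \<rho>: "\<rho> > 0"
  shows "ocp_integrand N \<Gamma> \<rho> (\<lambda>j\<in>{..<N}. (1 / sqrt \<rho>) *\<^sub>R u j)
       = exp (\<Gamma> * (real N)^2 * ln \<rho> / 4) * (1 / sqrt \<rho>) powr (\<Gamma> * card (PS N)) * ocp_integrand N \<Gamma> 1 u"
proof -
  let ?c = "1 / sqrt \<rho>"
  have c: "?c > 0" using \<rho> by simp
  have pref: "exp (- \<Gamma> * (real N)^2 * (ln (sqrt (real N / (pi * \<rho>))) / 2 - 3/8))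
     = exp (\<Gamma> * (real N)^2 * ln \<rho> / 4) * exp (- \<Gamma> * (real N)^2 * (ln (sqrt (real N / (pi * 1))) / 2 - 3/8))"
  proof (cases "N = 0")
    case True then show ?thesis by simp
  next
    case False
    have h: "ln (sqrt (real N / (pi * \<rho>))) = ln (sqrt (real N / pi)) - ln \<rho> / 2"
      using False \<rho> by (simp add: ln_sqrt ln_div ln_mult field_simps)
    have ex: "- \<Gamma> * (real N)^2 * (ln (sqrt (real N / (pi * \<rho>))) / 2 - 3/8)
       = \<Gamma> * (real N)^2 * ln \<rho> / 4 + - \<Gamma> * (real N)^2 * (ln (sqrt (real N / (pi * 1))) / 2 - 3/8)"
      unfolding h by (simp add: algebra_simps divide_simps)
    show ?thesis unfolding ex exp_add ..
  qed
  have gauss: "\<rho> * (\<Sum>j<N. (cmod ((\<lambda>j\<in>{..<N}. ?c *\<^sub>R u j) j))^2) = 1 * (\<Sum>j<N. (cmod (u j))^2)"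
    using \<rho> by (simp add: sum_distrib_left power_mult_distrib real_sqrt_pow2 power_divide)
  have prod: "(\<Prod>p\<in>PS N. cmod ((\<lambda>j\<in>{..<N}. ?c *\<^sub>R u j) (snd p) - (\<lambda>j\<in>{..<N}. ?c *\<^sub>R u j) (fst p)) powr \<Gamma>)
      = ?c powr (\<Gamma> * card (PS N)) * (\<Prod>p\<in>PS N. cmod (u (snd p) - u (fst p)) powr \<Gamma>)"
  proof -
    have "(\<Prod>p\<in>PS N. cmod ((\<lambda>j\<in>{..<N}. ?c *\<^sub>R u j) (snd p) - (\<lambda>j\<in>{..<N}. ?c *\<^sub>R u j) (fst p)) powr \<Gamma>)
        = (\<Prod>p\<in>PS N. ?c powr \<Gamma> * cmod (u (snd p) - u (fst p)) powr \<Gamma>)"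
    proof (rule prod.cong)
      fix p assume "p \<in> PS N"
      then have "snd p < N" "fst p < N" by (auto simp: PS_def)
      then have "(\<lambda>j\<in>{..<N}. ?c *\<^sub>R u j) (snd p) - (\<lambda>j\<in>{..<N}. ?c *\<^sub>R u j) (fst p) = ?c *\<^sub>R (u (snd p) - u (fst p))"
        by (simp add: scaleR_diff_right)
      then show "cmod ((\<lambda>j\<in>{..<N}. ?c *\<^sub>R u j) (snd p) - (\<lambda>j\<in>{..<N}. ?c *\<^sub>R u j) (fst p)) powr \<Gamma>
          = ?c powr \<Gamma> * cmod (u (snd p) - u (fst p)) powr \<Gamma>"
        using c \<rho> by (simp add: powr_divide)
    qed simp
    also have "\<dots> = ?c powr (\<Gamma> * card (PS N)) * (\<Prod>p\<in>PS N. cmod (u (snd p) - u (fst p)) powr \<Gamma>)"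
      using c by (simp add: prod.distrib powr_realpow[symmetric] powr_powr)
    finally show ?thesis .
  qed
  show ?thesis
  proof -
    have g2: "- pi * \<Gamma> * \<rho> * (\<Sum>j<N. (cmod ((\<lambda>j\<in>{..<N}. ?c *\<^sub>R u j) j))^2) / 2
       = - pi * \<Gamma> * (\<rho> * (\<Sum>j<N. (cmod ((\<lambda>j\<in>{..<N}. ?c *\<^sub>R u j) j))^2)) / 2"
      by (simp add: mult_ac)
    show ?thesis
      unfolding integrand_alt pref prod g2 gauss by (simp add: mult_ac)
  qed
qed



definition LL :: "nat \<Rightarrow> real \<Rightarrow> real \<Rightarrow> real" where
  "LL N \<Gamma> \<rho> = (1 / sqrt \<rho>)^(2*N) * (exp (\<Gamma> * (real N)^2 * ln \<rho> / 4) * (1 / sqrt \<rho>) powr (\<Gamma> * card (PS N)))"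

lemma Z_scale:
  assumes \<rho>: "\<rho> > 0"
  shows "ocp_Z N \<Gamma> \<rho> = LL N \<Gamma> \<rho> * ocp_Z N \<Gamma> 1"
proof -
  let ?c = "1 / sqrt \<rho>"
  have c: "?c \<noteq> 0" "?c > 0" using \<rho> by auto
  have "(\<integral>\<^sup>+ r. ennreal (ocp_integrand N \<Gamma> \<rho> r) \<partial>PC {..<N})
     = (\<integral>\<^sup>+ u. ennreal (\<bar>?c\<bar>^(2*card {..<N})) * ennreal (ocp_integrand N \<Gamma> \<rho> (\<lambda>j\<in>{..<N}. ?c *\<^sub>R u j)) \<partial>PC {..<N})"
    by (rule scale[OF c(1)]) auto
  also have "\<dots> = (\<integral>\<^sup>+ u. ennreal (LL N \<Gamma> \<rho>) * ennreal (ocp_integrand N \<Gamma> 1 u) \<partial>PC {..<N})"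
  proof (rule nn_integral_cong)
    fix u :: "nat \<Rightarrow> complex"
    show "ennreal (\<bar>?c\<bar>^(2*card {..<N})) * ennreal (ocp_integrand N \<Gamma> \<rho> (\<lambda>j\<in>{..<N}. ?c *\<^sub>R u j))
        = ennreal (LL N \<Gamma> \<rho>) * ennreal (ocp_integrand N \<Gamma> 1 u)"
      unfolding integrand_scale[OF \<rho>] LL_def using c integrand_nonneg[of N \<Gamma> 1 u]
      by (simp add: ennreal_mult'[symmetric] mult_ac)
  qed
  also have "\<dots> = ennreal (LL N \<Gamma> \<rho>) * (\<integral>\<^sup>+ u. ennreal (ocp_integrand N \<Gamma> 1 u) \<partial>PC {..<N})"
    by (rule nn_integral_cmult) measurable
  finally show ?thesis
    unfolding ocp_Z_def using c by (simp add: enn2real_mult LL_def)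
qed

lemma fN_shift:
  assumes \<rho>: "\<rho> > 0" and N: "N > 0" and Z: "ocp_Z N \<Gamma> 1 > 0"
  shows "ocp_fN \<Gamma> \<rho> N = (1 - \<Gamma>/4) * ln \<rho> + ocp_fN \<Gamma> 1 N"
proof -
  have Lpos: "LL N \<Gamma> \<rho> > 0" using \<rho> by (simp add: LL_def)
  have cardr: "real (card (PS N)) = real N * (real N - 1) / 2"
  proof -
    have "real (2 * card (PS N)) = real (N * (N - 1))" by (simp only: card_PS)
    then show ?thesis using N by (simp add: of_nat_diff)
  qed
  have lnL: "ln (LL N \<Gamma> \<rho>) = ln \<rho> * (\<Gamma> * N / 4 - N)"
    using \<rho> unfolding LL_def
    by (simp add: ln_mult ln_realpow ln_powr ln_div ln_sqrt cardr field_simps power2_eq_square)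
  show ?thesis
    unfolding ocp_fN_def Z_scale[OF \<rho>] using Lpos Z N
    by (simp add: ln_mult lnL field_simps)
qed



lemma bound_exists:
  fixes p b :: real
  assumes p: "p \<ge> 0" and b: "b > 0"
  shows "\<exists>C. \<forall>t\<ge>0. (1+t) powr p * exp (- b * t^2) \<le> C"
proof -
  have "((\<lambda>t. (1+t) powr p * exp (- b * t^2)) \<longlongrightarrow> 0) at_top"
    using b by real_asymp
  then have "eventually (\<lambda>t. (1+t) powr p * exp (- b * t^2) < 1) at_top"
    by (rule order_tendstoD(2)) simp
  then obtain T where T: "\<And>t. t \<ge> T \<Longrightarrow> (1+t) powr p * exp (- b * t^2) < 1"
    by (auto simp: eventually_at_top_linorder)
  show ?thesis
  proof (intro exI allI impI)
    fix t :: real assume t: "t \<ge> 0"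
    show "(1+t) powr p * exp (- b * t^2) \<le> 1 + (1 + max T 0) powr p"
    proof (cases "t \<ge> T")
      case True then show ?thesis using T[of t] powr_ge_zero[of "1 + max T 0" p] by linarith
    next
      case False
      have "(1+t) powr p * exp (- b * t^2) \<le> (1 + max T 0) powr p * 1"
        using False t b p by (intro mult_mono powr_mono2) auto
      then show ?thesis by simp
    qed
  qed
qed

lemma gauss_finite:
  fixes b :: real assumes b: "b > 0"
  shows "(\<integral>\<^sup>+x. ennreal (exp (- b * x^2)) \<partial>lborel) < \<infinity>"
proof -
  define \<sigma> where "\<sigma> = sqrt (1 / (2*b))"
  have s: "\<sigma> > 0" "\<sigma>^2 = 1/(2*b)" using b by (auto simp: \<sigma>_def)
  define k where "k = sqrt (2 * pi * \<sigma>^2)"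
  have k: "k > 0" using s b by (simp add: k_def)
  have eq: "exp (- b * x^2) = k * normal_density 0 \<sigma> x" for x
    using k s b unfolding normal_density_def k_def by (simp add: field_simps)
  have "(\<integral>\<^sup>+x. ennreal (exp (- b * x^2)) \<partial>lborel) = (\<integral>\<^sup>+x. ennreal k * ennreal (normal_density 0 \<sigma> x) \<partial>lborel)"
    unfolding eq using k by (simp add: ennreal_mult)
  also have "\<dots> = ennreal k * (\<integral>\<^sup>+x. ennreal (normal_density 0 \<sigma> x) \<partial>lborel)"
    by (rule nn_integral_cmult) measurable
  also have "(\<integral>\<^sup>+x. ennreal (normal_density 0 \<sigma> x) \<partial>lborel) = ennreal 1"
    using s(1) by (subst nn_integral_eq_integral) (auto intro: integrable_normal_density simp: integral_normal_density)
  finally show ?thesis by simp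
qed

lemma gauss_finite_C:
  fixes b :: real assumes b: "b > 0"
  shows "(\<integral>\<^sup>+z. ennreal (exp (- b * (cmod z)^2)) \<partial>(lborel::complex measure)) < \<infinity>"
proof -
  have "(\<integral>\<^sup>+z. ennreal (exp (- b * (cmod z)^2)) \<partial>(lborel::complex measure))
      = (\<integral>\<^sup>+z. (\<Prod>j\<in>Basis. (\<lambda>j x. ennreal (exp (- b * x^2))) j (z \<bullet> j)) \<partial>(lborel::complex measure))"
  proof (rule nn_integral_cong)
    fix z :: complex
    have "exp (- b * (cmod z)^2) = exp (- b * (Re z)^2) * exp (- b * (Im z)^2)"
      by (simp add: cmod_power2 exp_add[symmetric] algebra_simps)
    then show "ennreal (exp (- b * (cmod z)^2)) = (\<Prod>j\<in>Basis. (\<lambda>j x. ennreal (exp (- b * x^2))) j (z \<bullet> j))"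
      by (simp add: Basis_complex_def ennreal_mult)
  qed
  also have "\<dots> = (\<Prod>j\<in>(Basis::complex set). (\<integral>\<^sup>+x. ennreal (exp (- b * x^2)) \<partial>lborel))"
    by (rule nn_integral_lborel_prod) auto
  also have "\<dots> < \<infinity>"
    using gauss_finite[OF b] by (simp add: less_top[symmetric] ennreal_prod_eq_top power2_eq_square ennreal_mult_eq_top_iff)
  finally show ?thesis .
qed



definition pref1 :: "nat \<Rightarrow> real \<Rightarrow> real" where
  "pref1 N \<Gamma> = exp (- \<Gamma> * (real N)^2 * (ln (sqrt (real N / (pi * 1))) / 2 - 3/8))"

definition hh :: "nat \<Rightarrow> real \<Rightarrow> complex \<Rightarrow> real" where
  "hh N \<Gamma> z = (1 + cmod z) powr (\<Gamma> * card (PS N)) * exp (- pi * \<Gamma> * (cmod z)^2 / 2)"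

lemma integrand_upper:
  assumes \<Gamma>: "\<Gamma> > 0"
  shows "ocp_integrand N \<Gamma> 1 u \<le> (pref1 N \<Gamma> * 2 powr (\<Gamma> * card (PS N))) * (\<Prod>j<N. hh N \<Gamma> (u j))"
proof -
  define m where "m = (\<Prod>j<N. 1 + cmod (u j))"
  have m1: "m \<ge> 1" unfolding m_def by (rule prod_ge_1) simp
  have mj: "1 + cmod (u j) \<le> m" if "j < N" for j
  proof -
    have "m = (1 + cmod (u j)) * (\<Prod>i\<in>{..<N} - {j}. 1 + cmod (u i))"
      unfolding m_def using that by (subst prod.remove[of _ j]) auto
    moreover have "(\<Prod>i\<in>{..<N} - {j}. 1 + cmod (u i)) \<ge> 1" by (rule prod_ge_1) simp
    ultimately show ?thesis using mult_left_mono[of 1 "\<Prod>i\<in>{..<N} - {j}. 1 + cmod (u i)" "1 + cmod (u j)"] by simp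
  qed
  have P: "(\<Prod>p\<in>PS N. cmod (u (snd p) - u (fst p)) powr \<Gamma>) \<le> (\<Prod>p\<in>PS N. (2*m) powr \<Gamma>)"
  proof (rule prod_mono)
    fix p assume p: "p \<in> PS N"
    then have "snd p < N" "fst p < N" by (auto simp: PS_def)
    then have "cmod (u (snd p) - u (fst p)) \<le> 2*m"
      using mj[of "snd p"] mj[of "fst p"] norm_triangle_ineq4[of "u (snd p)" "u (fst p)"] by linarith
    then show "0 \<le> cmod (u (snd p) - u (fst p)) powr \<Gamma> \<and> cmod (u (snd p) - u (fst p)) powr \<Gamma> \<le> (2*m) powr \<Gamma>"
      using \<Gamma> by (auto intro: powr_mono2)
  qed
  have P2: "(\<Prod>p\<in>PS N. (2*m) powr \<Gamma>) = 2 powr (\<Gamma> * card (PS N)) * (\<Prod>j<N. (1 + cmod (u j)) powr (\<Gamma> * card (PS N)))"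
  proof -
    have "(\<Prod>p\<in>PS N. (2*m) powr \<Gamma>) = ((2*m) powr \<Gamma>) powr (real (card (PS N)))"
      using m1 by (simp add: powr_realpow)
    also have "\<dots> = 2 powr (\<Gamma> * card (PS N)) * m powr (\<Gamma> * card (PS N))"
      using m1 by (simp add: powr_powr powr_mult)
    also have "m powr (\<Gamma> * card (PS N)) = (\<Prod>j<N. (1 + cmod (u j)) powr (\<Gamma> * card (PS N)))"
      unfolding m_def by (rule prod_powr_distrib)
    finally show ?thesis .
  qed
  have X: "exp (- pi * \<Gamma> * 1 * (\<Sum>j<N. (cmod (u j))^2) / 2) = (\<Prod>j<N. exp (- pi * \<Gamma> * (cmod (u j))^2 / 2))"
  proof -
    have "- pi * \<Gamma> * 1 * (\<Sum>j<N. (cmod (u j))^2) / 2 = (\<Sum>j<N. - pi * \<Gamma> * (cmod (u j))^2 / 2)"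
      by (simp add: sum_distrib_left sum_divide_distrib)
    then show ?thesis by (simp add: exp_sum)
  qed
  have "ocp_integrand N \<Gamma> 1 u = pref1 N \<Gamma> * (\<Prod>j<N. exp (- pi * \<Gamma> * (cmod (u j))^2 / 2))
        * (\<Prod>p\<in>PS N. cmod (u (snd p) - u (fst p)) powr \<Gamma>)"
    unfolding integrand_alt pref1_def X ..
  also have "\<dots> \<le> pref1 N \<Gamma> * (\<Prod>j<N. exp (- pi * \<Gamma> * (cmod (u j))^2 / 2))
        * (2 powr (\<Gamma> * card (PS N)) * (\<Prod>j<N. (1 + cmod (u j)) powr (\<Gamma> * card (PS N))))"
    using P P2 by (intro mult_left_mono) (auto simp: pref1_def intro!: prod_nonneg mult_nonneg_nonneg)
  also have "\<dots> = (pref1 N \<Gamma> * 2 powr (\<Gamma> * card (PS N))) * (\<Prod>j<N. hh N \<Gamma> (u j))"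
    unfolding hh_def prod.distrib by (simp add: mult_ac)
  finally show ?thesis .
qed

lemma hh_meas[measurable]: "hh N \<Gamma> \<in> borel_measurable borel"
  unfolding hh_def by measurable

lemma hh_nonneg: "hh N \<Gamma> z \<ge> 0" unfolding hh_def by simp

lemma hh_finite:
  assumes \<Gamma>: "\<Gamma> > 0"
  shows "(\<integral>\<^sup>+z. ennreal (hh N \<Gamma> z) \<partial>(lborel::complex measure)) < \<infinity>"
proof -
  define b where "b = pi * \<Gamma> / 4"
  have b: "b > 0" using \<Gamma> by (simp add: b_def)
  obtain C where C: "\<And>t. t \<ge> 0 \<Longrightarrow> (1+t) powr (\<Gamma> * card (PS N)) * exp (- b * t^2) \<le> C"
    using bound_exists[of "\<Gamma> * card (PS N)" b] b \<Gamma> by auto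
  have C0: "C \<ge> 0" using C[of 0] by simp
  have "(\<integral>\<^sup>+z. ennreal (hh N \<Gamma> z) \<partial>(lborel::complex measure)) \<le> (\<integral>\<^sup>+z. ennreal C * ennreal (exp (- b * (cmod z)^2)) \<partial>lborel)"
  proof (rule nn_integral_mono)
    fix z :: complex
    have "hh N \<Gamma> z = ((1 + cmod z) powr (\<Gamma> * card (PS N)) * exp (- b * (cmod z)^2)) * exp (- b * (cmod z)^2)"
      unfolding hh_def b_def by (simp add: exp_add[symmetric] mult_ac)
    also have "\<dots> \<le> C * exp (- b * (cmod z)^2)"
      using C[of "cmod z"] by (intro mult_right_mono) auto
    finally show "ennreal (hh N \<Gamma> z) \<le> ennreal C * ennreal (exp (- b * (cmod z)^2))"
      using C0 by (simp add: ennreal_mult[symmetric] ennreal_leI)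
  qed
  also have "\<dots> = ennreal C * (\<integral>\<^sup>+z. ennreal (exp (- b * (cmod z)^2)) \<partial>lborel)"
    by (rule nn_integral_cmult) measurable
  also have "\<dots> < \<infinity>"
    using gauss_finite_C[OF b] by (simp add: less_top[symmetric] ennreal_mult_eq_top_iff)
  finally show ?thesis .
qed

lemma int_finite:
  assumes \<Gamma>: "\<Gamma> > 0"
  shows "(\<integral>\<^sup>+ u. ennreal (ocp_integrand N \<Gamma> 1 u) \<partial>PC {..<N}) < \<infinity>"
proof -
  interpret product_sigma_finite "\<lambda>_::nat. lborel :: complex measure" by (rule psf)
  define A where "A = pref1 N \<Gamma> * 2 powr (\<Gamma> * card (PS N))"
  have A: "A \<ge> 0" by (simp add: A_def pref1_def)
  have "(\<integral>\<^sup>+ u. ennreal (ocp_integrand N \<Gamma> 1 u) \<partial>PC {..<N}) \<le> (\<integral>\<^sup>+ u. ennreal A * (\<Prod>j\<in>{..<N}. ennreal (hh N \<Gamma> (u j))) \<partial>PC {..<N})"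
  proof (rule nn_integral_mono)
    fix u :: "nat \<Rightarrow> complex"
    show "ennreal (ocp_integrand N \<Gamma> 1 u) \<le> ennreal A * (\<Prod>j\<in>{..<N}. ennreal (hh N \<Gamma> (u j)))"
      using integrand_upper[OF \<Gamma>, of N u] A
      by (simp add: prod_ennreal hh_nonneg ennreal_mult[symmetric] prod_nonneg A_def ennreal_leI)
  qed
  also have "\<dots> = ennreal A * (\<integral>\<^sup>+ u. (\<Prod>j\<in>{..<N}. ennreal (hh N \<Gamma> (u j))) \<partial>PC {..<N})"
    by (rule nn_integral_cmult) measurable
  also have "(\<integral>\<^sup>+ u. (\<Prod>j\<in>{..<N}. ennreal (hh N \<Gamma> (u j))) \<partial>PC {..<N}) = (\<Prod>j\<in>{..<N}. (\<integral>\<^sup>+z. ennreal (hh N \<Gamma> z) \<partial>lborel))"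
    by (rule product_nn_integral_prod[where f="\<lambda>j z. ennreal (hh N \<Gamma> z)"]) auto
  also have "ennreal A * \<dots> < \<infinity>"
    using hh_finite[OF \<Gamma>, of N] by (simp add: less_top[symmetric] ennreal_mult_eq_top_iff ennreal_prod_eq_top power_eq_top_ennreal)
  finally show ?thesis .
qed



lemma int_pos:
  assumes \<Gamma>: "\<Gamma> > 0"
  shows "(\<integral>\<^sup>+ u. ennreal (ocp_integrand N \<Gamma> 1 u) \<partial>PC {..<N}) > 0"
proof -
  interpret product_sigma_finite "\<lambda>_::nat. lborel :: complex measure" by (rule psf)
  define S where "S = PiE {..<N} (\<lambda>j. ball (of_nat j :: complex) (1/4))"
  define B where "B = (\<Sum>j<N. (real j + 1)^2)"
  define \<epsilon> where "\<epsilon> = pref1 N \<Gamma> * exp (- pi * \<Gamma> * 1 * B / 2) * (\<Prod>p\<in>PS N. (1/2::real) powr \<Gamma>)"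
  have \<epsilon>: "\<epsilon> > 0" by (simp add: \<epsilon>_def pref1_def)
  have lower: "\<epsilon> \<le> ocp_integrand N \<Gamma> 1 u" if u: "u \<in> S" for u
  proof -
    have uj: "cmod (u j - of_nat j) < 1/4" if "j < N" for j
    proof -
      have "u j \<in> ball (of_nat j :: complex) (1/4)"
        using u that unfolding S_def by (simp add: PiE_iff)
      then have "dist (u j) (of_nat j) < 1/4" by (simp add: dist_commute)
      then show ?thesis by (simp only: dist_norm)
    qed
    have nj: "cmod (u j) \<le> real j + 1" if "j < N" for j
    proof -
      have "cmod (u j) \<le> cmod (of_nat j :: complex) + cmod (u j - of_nat j)"
        using norm_triangle_ineq[of "of_nat j :: complex" "u j - of_nat j"] by simp
      then show ?thesis using uj[OF that] by simp
    qed
    have sum: "(\<Sum>j<N. (cmod (u j))^2) \<le> B"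
      unfolding B_def by (rule sum_mono) (use nj in \<open>auto intro: power_mono\<close>)
    have e: "exp (- pi * \<Gamma> * 1 * B / 2) \<le> exp (- pi * \<Gamma> * 1 * (\<Sum>j<N. (cmod (u j))^2) / 2)"
    proof -
      have "pi * \<Gamma> * (\<Sum>j<N. (cmod (u j))^2) \<le> pi * \<Gamma> * B"
        by (rule mult_left_mono) (use sum \<Gamma> in auto)
      then show ?thesis by simp
    qed
    have p: "(\<Prod>p\<in>PS N. (1/2::real) powr \<Gamma>) \<le> (\<Prod>p\<in>PS N. cmod (u (snd p) - u (fst p)) powr \<Gamma>)"
    proof (rule prod_mono)
      fix p assume p: "p \<in> PS N"
      then have lt: "fst p < snd p" "snd p < N" by (auto simp: PS_def)
      have "cmod (of_nat (snd p) - of_nat (fst p) :: complex) = real (snd p) - real (fst p)"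
      proof -
        have "(of_nat (snd p) - of_nat (fst p) :: complex) = of_real (real (snd p) - real (fst p))" by simp
        then show ?thesis using lt by (simp only: norm_of_real)
      qed
      moreover have "cmod (of_nat (snd p) - of_nat (fst p) :: complex)
          \<le> cmod (u (snd p) - u (fst p)) + cmod (u (snd p) - of_nat (snd p)) + cmod (u (fst p) - of_nat (fst p))"
      proof -
        have eq: "(of_nat (snd p) - of_nat (fst p) :: complex) = (u (snd p) - u (fst p)) - (u (snd p) - of_nat (snd p)) + (u (fst p) - of_nat (fst p))"
          by (simp add: algebra_simps)
        show ?thesis unfolding eq
          using norm_triangle_ineq[of "(u (snd p) - u (fst p)) - (u (snd p) - of_nat (snd p))" "u (fst p) - of_nat (fst p)"]
            norm_triangle_ineq4[of "u (snd p) - u (fst p)" "u (snd p) - of_nat (snd p)"] by linarith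
      qed
      moreover have "real (snd p) - real (fst p) \<ge> 1" using lt by simp
      ultimately have "cmod (u (snd p) - u (fst p)) \<ge> 1/2"
        using uj[of "snd p"] uj[of "fst p"] lt by linarith
      then show "0 \<le> (1/2::real) powr \<Gamma> \<and> (1/2::real) powr \<Gamma> \<le> cmod (u (snd p) - u (fst p)) powr \<Gamma>"
        using \<Gamma> by (auto intro: powr_mono2)
    qed
    show ?thesis
      unfolding integrand_alt \<epsilon>_def pref1_def
      using e p by (intro mult_mono mult_left_mono) (simp_all add: prod_nonneg)
  qed
  have Ssets: "S \<in> sets (PC {..<N})"
    unfolding S_def by (rule sets_PiM_I_finite) auto
  have meas: "emeasure (PC {..<N}) S = ennreal (\<Prod>j<N. unit_ball_vol 2 * (1/4)^2)"
    unfolding S_def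
    by (subst emeasure_PiM) (auto simp: emeasure_ball prod_ennreal ennreal_power)
  have mpos: "emeasure (PC {..<N}) S > 0"
    unfolding meas by (simp add: prod_pos)
  have "ennreal \<epsilon> * emeasure (PC {..<N}) S = (\<integral>\<^sup>+ u. ennreal \<epsilon> * indicator S u \<partial>PC {..<N})"
    using Ssets by (simp add: nn_integral_cmult_indicator)
  also have "\<dots> \<le> (\<integral>\<^sup>+ u. ennreal (ocp_integrand N \<Gamma> 1 u) \<partial>PC {..<N})"
    by (rule nn_integral_mono) (auto simp: indicator_def intro: ennreal_leI lower)
  finally have le: "ennreal \<epsilon> * emeasure (PC {..<N}) S \<le> (\<integral>\<^sup>+ u. ennreal (ocp_integrand N \<Gamma> 1 u) \<partial>PC {..<N})" .
  have pos: "0 < ennreal \<epsilon> * emeasure (PC {..<N}) S"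
    using \<epsilon> mpos by (simp add: ennreal_zero_less_mult_iff)
  show ?thesis using pos le by (rule order_less_le_trans)
qed

lemma Z_pos:
  assumes \<Gamma>: "\<Gamma> > 0"
  shows "ocp_Z N \<Gamma> 1 > 0"
  unfolding ocp_Z_def using int_pos[OF \<Gamma>, of N] int_finite[OF \<Gamma>, of N]
  by (simp add: enn2real_positive_iff)



lemma lim_disk_exp:
  fixes G y :: real assumes "y < 0" "G > 0"
  shows "((\<lambda>x::real. - (x+1) * G / 2 * ((sqrt x - y)^2 / (x+1) - 1) + (x+1) * G * ln ((sqrt x - y) / sqrt (x+1))
          - G / 2 * ln ((sqrt x - y)^2 / (x+1) - 1) - G/4 * ln (x+1)) \<longlongrightarrow> - G * y^2 - G/2 * ln (2 * \<bar>y\<bar>)) at_top"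
proof -
  have "((\<lambda>x::real. - (x+1) * G / 2 * ((sqrt x - y)^2 / (x+1) - 1) + (x+1) * G * ln ((sqrt x - y) / sqrt (x+1))
          - G / 2 * ln ((sqrt x - y)^2 / (x+1) - 1) - G/4 * ln (x+1)) \<longlongrightarrow> G * (- (y * y / 2) - 1 / 2) - G * (y * y - 1) / 2 - G * ln (- (y * 2)) / 2) at_top"
    using assms by real_asymp
  moreover have "G * (- (y * y / 2) - 1 / 2) - G * (y * y - 1) / 2 - G * ln (- (y * 2)) / 2 = - G * y^2 - G/2 * ln (2 * \<bar>y\<bar>)"
    using assms by (simp add: algebra_simps power2_eq_square abs_if)
  ultimately show ?thesis by simp
qed

lemma lim_D:
  fixes a :: real assumes "a < 0"
  shows "((\<lambda>x::real. sqrt x * (1 - exp (a / sqrt x))) \<longlongrightarrow> -a) at_top"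
  using assms by real_asymp


lemma lim_c_sqrt: "((\<lambda>x::real. c / sqrt x) \<longlongrightarrow> 0) at_top"
  by real_asymp

theorem corollary1:
  fixes \<Gamma> y :: real
  assumes "\<Gamma> > 0"
    and "\<And>\<rho>b. \<rho>b > 0 \<Longrightarrow> convergent (ocp_fN \<Gamma> \<rho>b)"
    and "y < 0"
  shows "((\<lambda>N::nat. rho_disk \<Gamma> (real (N + 1)) (sqrt (real N) - y))
           \<longlonglongrightarrow> exp (beta_f \<Gamma> (1/pi)) * exp (- \<Gamma> * y^2) / (2 * \<bar>y\<bar>) powr (\<Gamma>/2))
       \<and> ((\<lambda>N::nat. rho_cyl \<Gamma> (real N) (y / sqrt pi) / pi)
           \<longlonglongrightarrow> exp (beta_f \<Gamma> (1/pi)) * exp (- \<Gamma> * y^2) / (2 * \<bar>y\<bar>) powr (\<Gamma>/2))"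
proof -
  note \<Gamma> = assms(1) and y = assms(3)
  define b1 where "b1 = beta_f \<Gamma> 1"
  define bp where "bp = beta_f \<Gamma> (1/pi)"
  have f1: "ocp_fN \<Gamma> 1 \<longlonglongrightarrow> b1"
    using assms(2)[of 1] unfolding b1_def beta_f_def by (simp add: convergent_LIMSEQ_iff)
  have fp: "ocp_fN \<Gamma> (1/pi) \<longlonglongrightarrow> (1 - \<Gamma>/4) * ln (1/pi) + b1"
  proof -
    have "(\<lambda>N. (1 - \<Gamma>/4) * ln (1/pi) + ocp_fN \<Gamma> 1 N) \<longlonglongrightarrow> (1 - \<Gamma>/4) * ln (1/pi) + b1"
      by (intro tendsto_intros f1)
    moreover have "eventually (\<lambda>N. (1 - \<Gamma>/4) * ln (1/pi) + ocp_fN \<Gamma> 1 N = ocp_fN \<Gamma> (1/pi) N) sequentially"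
      using eventually_gt_at_top[of "0::nat"]
      by eventually_elim (simp add: fN_shift[of "1/pi"] Z_pos[OF \<Gamma>])
    ultimately show ?thesis by (rule Lim_transform_eventually)
  qed
  have bp: "bp = (1 - \<Gamma>/4) * ln (1/pi) + b1"
    unfolding bp_def beta_f_def using fp by (rule limI)
  define T where "T = exp bp * exp (- \<Gamma> * y^2) / (2 * \<bar>y\<bar>) powr (\<Gamma>/2)"
  have disk: "(\<lambda>N::nat. rho_disk \<Gamma> (real (N + 1)) (sqrt (real N) - y)) \<longlonglongrightarrow> T"
  proof -
    define E where "E = (\<lambda>x::real. - (x+1) * \<Gamma> / 2 * ((sqrt x - y)^2 / (x+1) - 1) + (x+1) * \<Gamma> * ln ((sqrt x - y) / sqrt (x+1))
          - \<Gamma> / 2 * ln ((sqrt x - y)^2 / (x+1) - 1) - \<Gamma>/4 * ln (x+1))"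
    have "(E \<longlongrightarrow> - \<Gamma> * y^2 - \<Gamma>/2 * ln (2 * \<bar>y\<bar>)) at_top"
      unfolding E_def by (rule lim_disk_exp[OF y \<Gamma>])
    then have "((\<lambda>N::nat. E (real N)) \<longlongrightarrow> - \<Gamma> * y^2 - \<Gamma>/2 * ln (2 * \<bar>y\<bar>)) sequentially"
      by (rule filterlim_compose[OF _ filterlim_real_sequentially])
    then have L: "(\<lambda>N::nat. exp bp * exp (E (real N))) \<longlonglongrightarrow> exp bp * exp (- \<Gamma> * y^2 - \<Gamma>/2 * ln (2 * \<bar>y\<bar>))"
      by (intro tendsto_intros)
    have Teq: "exp bp * exp (- \<Gamma> * y^2 - \<Gamma>/2 * ln (2 * \<bar>y\<bar>)) = T"
      using y unfolding T_def by (simp add: exp_diff powr_def)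
    have req: "rho_disk \<Gamma> (real (N + 1)) (sqrt (real N) - y) = exp bp * exp (E (real N))" for N
      unfolding rho_disk_def E_def bp_def by (simp add: powr_def exp_diff add.commute)
    show ?thesis unfolding req using L unfolding Teq .
  qed
  have cyl: "(\<lambda>N::nat. rho_cyl \<Gamma> (real N) (y / sqrt pi) / pi) \<longlonglongrightarrow> T"
  proof -
    define a where "a = 4 * sqrt pi * y"
    have a: "a < 0" using y by (simp add: a_def mult_pos_neg)
    define D where "D = (\<lambda>x::real. sqrt x * (1 - exp (a / sqrt x)))"
    define g where "g = (\<lambda>x::real. exp b1 / pi * exp (- \<Gamma> * y^2 + \<Gamma> * sqrt pi * y / sqrt x) * (2 * pi / D x) powr (\<Gamma>/2))"
    have D: "(D \<longlongrightarrow> -a) at_top" unfolding D_def by (rule lim_D[OF a])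
    have "(g \<longlongrightarrow> exp b1 / pi * exp (- \<Gamma> * y^2 + \<Gamma> * sqrt pi * y * 0) * (2 * pi / (-a)) powr (\<Gamma>/2)) at_top"
      unfolding g_def using a
      by (intro tendsto_intros D) (auto intro: lim_c_sqrt)
    then have gl: "(g \<longlongrightarrow> T) at_top"
    proof -
      have h1: "2 * pi / (-a) = sqrt pi / (2 * \<bar>y\<bar>)"
      proof -
        have "sqrt pi * sqrt pi = pi" by simp
        then show ?thesis using y unfolding a_def by (simp add: field_simps abs_if)
      qed
      have h2: "(sqrt pi / (2 * \<bar>y\<bar>)) powr (\<Gamma>/2) = pi powr (\<Gamma>/4) / (2 * \<bar>y\<bar>) powr (\<Gamma>/2)"
      proof -
        have "sqrt pi powr (\<Gamma>/2) = (pi powr (1/2)) powr (\<Gamma>/2)" by (simp add: powr_half_sqrt)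
        also have "\<dots> = pi powr (\<Gamma>/4)" by (simp add: powr_powr)
        finally show ?thesis by (simp add: powr_divide)
      qed
      have h3: "exp bp = exp b1 * (pi powr (\<Gamma>/4) / pi)"
      proof -
        have "exp ((1 - \<Gamma>/4) * ln (1/pi)) = (1/pi) powr (1 - \<Gamma>/4)" by (simp add: powr_def)
        also have "\<dots> = pi powr (\<Gamma>/4 - 1)" by (simp add: powr_divide powr_minus_divide[symmetric])
        also have "\<dots> = pi powr (\<Gamma>/4) / pi" by (simp add: powr_diff)
        finally show ?thesis unfolding bp by (simp add: exp_add)
      qed
      have "exp b1 / pi * exp (- \<Gamma> * y^2 + \<Gamma> * sqrt pi * y * 0) * (2 * pi / (-a)) powr (\<Gamma>/2) = T"
        unfolding T_def h1 h2 h3 by simp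
      then show ?thesis using \<open>(g \<longlongrightarrow> _) at_top\<close> by simp
    qed
    have "((\<lambda>N::nat. g (real N)) \<longlongrightarrow> T) sequentially"
      by (rule filterlim_compose[OF gl filterlim_real_sequentially])
    moreover have "eventually (\<lambda>N. g (real N) = rho_cyl \<Gamma> (real N) (y / sqrt pi) / pi) sequentially"
      using eventually_gt_at_top[of "0::nat"]
    proof eventually_elim
      case (elim N)
      define x where "x = real N"
      have x: "x > 0" using elim by (simp add: x_def)
      have e1: "exp (a / sqrt x) < 1" using a x by (simp add: divide_neg_pos)
      have q1: "pi * (y / sqrt pi)^2 = y^2"
        by (simp add: power_divide)
      have q2: "pi * (y / sqrt pi) = sqrt pi * y"
      proof -
        have "sqrt pi * sqrt pi = pi" by simp
        then show ?thesis by (simp add: field_simps)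
      qed
      have q3: "4 * pi * (y / sqrt pi) / sqrt x = a / sqrt x"
      proof -
        have "4 * pi * (y / sqrt pi) / sqrt x = 4 * (pi * (y / sqrt pi)) / sqrt x" by simp
        also have "\<dots> = a / sqrt x" unfolding q2 a_def by (simp add: mult_ac)
        finally show ?thesis .
      qed
      have q4: "(2 * pi / D x) powr (\<Gamma>/2) = (2 * pi / sqrt x) powr (\<Gamma>/2) / (1 - exp (a / sqrt x)) powr (\<Gamma>/2)"
        unfolding D_def by (simp add: powr_divide[symmetric] field_simps)
      have "rho_cyl \<Gamma> x (y / sqrt pi) / pi = (2 * pi / sqrt x) powr (\<Gamma>/2) * exp b1 *
         exp (- \<Gamma> * y^2 + \<Gamma> * (sqrt pi * y) / sqrt x) / (1 - exp (a / sqrt x)) powr (\<Gamma>/2) / pi"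
        unfolding rho_cyl_def b1_def q3[symmetric]
        by (simp add: q1[symmetric] q2[symmetric] mult.assoc)
      also have "\<dots> = g x"
        unfolding g_def q4 by (simp add: field_simps)
      finally show ?case by (simp add: x_def)
    qed
    ultimately show ?thesis by (rule Lim_transform_eventually)
  qed
  show ?thesis using disk cyl unfolding T_def bp_def by (intro conjI)
qed


end
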